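(* For every $1 \leqslant m \leqslant n$, $$\textup{Var}\big( q_m - q_{m-1} \big) \, \leqslant \, \mathbb{E}\big[ \textup{Inf}_m\big( f_R^\eta \big)^2 \big].$$
   Context: Let $R$ be a rectangle with sides parallel to the axes, let $\eta_1,\ldots,\eta_n$ be chosen independently and uniformly at random in $R$, $\eta = \{\eta_1,\ldots,\eta_n\}$, and let $\omega \colon \eta \to \{-1,1\}$ be a uniformly random colouring. The Voronoi cell of $u \in \eta$ is $C(u) = \{ x \in R : \|u - x\|_2 \leqslant \|v - x\|_2 \ \forall v \in \eta\}$; it is red if $\omega(u)=1$, blue otherwise. $H_R$ is the event that there is a path in $R$ from its left-hand side to its right-hand side intersecting only red cells; $f_R^\eta$ is its indicator as a function of $\omega$, and $\textup{Inf}_m(f_R^\eta) = \mathbb{P}( f_R^\eta(\omega) \neq f_R^\eta(\omega') \,|\, \eta )$, where $\omega'$ is $\omega$ with the colour of $\eta_m$ flipped. Let $q^\eta = \mathbb{P}(H_R \,|\, \eta)$, let $\mathcal{F}_m$ be the $\sigma$-algebra generated by $\eta_1,\ldots,\eta_m$, and $q_m = \mathbb{E}[q^\eta \,|\, \mathcal{F}_m]$ for $0 \leqslant m \leqslant n$. *)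

theory Defs
  imports "HOL-Probability.Probability"
begin

definition rect :: "real \<Rightarrow> real \<Rightarrow> real \<Rightarrow> real \<Rightarrow> (real \<times> real) set" where
  "rect a1 a2 b1 b2 = cbox (a1, a2) (b1, b2)"

definition vcell :: "(real \<times> real) set \<Rightarrow> nat \<Rightarrow> (nat \<Rightarrow> real \<times> real) \<Rightarrow> nat \<Rightarrow> (real \<times> real) set" where
  "vcell R n \<eta> u = {x \<in> R. \<forall>v\<in>{1..n}. dist (\<eta> u) x \<le> dist (\<eta> v) x}"

text \<open>The event H_R: a path in R from the left side to the right side of R
  such that every cell it intersects is red (omega u = True means red).\<close>
definition red_crossing :: "real \<Rightarrow> real \<Rightarrow> real \<Rightarrow> real \<Rightarrow> nat \<Rightarrow> (nat \<Rightarrow> real \<times> real) \<Rightarrow> (nat \<Rightarrow> bool) \<Rightarrow> bool" where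
  "red_crossing a1 a2 b1 b2 n \<eta> \<omega> \<longleftrightarrow>
     (\<exists>\<gamma>. path \<gamma> \<and> path_image \<gamma> \<subseteq> rect a1 a2 b1 b2 \<and>
          fst (pathstart \<gamma>) = a1 \<and> fst (pathfinish \<gamma>) = b1 \<and>
          (\<forall>u\<in>{1..n}. path_image \<gamma> \<inter> vcell (rect a1 a2 b1 b2) n \<eta> u \<noteq> {} \<longrightarrow> \<omega> u))"

definition fR :: "real \<Rightarrow> real \<Rightarrow> real \<Rightarrow> real \<Rightarrow> nat \<Rightarrow> (nat \<Rightarrow> real \<times> real) \<Rightarrow> (nat \<Rightarrow> bool) \<Rightarrow> real" where
  "fR a1 a2 b1 b2 n \<eta> \<omega> = (if red_crossing a1 a2 b1 b2 n \<eta> \<omega> then 1 else 0)"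

definition colourings :: "nat \<Rightarrow> (nat \<Rightarrow> bool) set" where
  "colourings n = PiE {1..n} (\<lambda>_. UNIV)"

definition colour_pmf :: "nat \<Rightarrow> (nat \<Rightarrow> bool) pmf" where
  "colour_pmf n = pmf_of_set (colourings n)"

definition qeta :: "real \<Rightarrow> real \<Rightarrow> real \<Rightarrow> real \<Rightarrow> nat \<Rightarrow> (nat \<Rightarrow> real \<times> real) \<Rightarrow> real" where
  "qeta a1 a2 b1 b2 n \<eta> = measure_pmf.prob (colour_pmf n) {\<omega>. red_crossing a1 a2 b1 b2 n \<eta> \<omega>}"

definition infl :: "real \<Rightarrow> real \<Rightarrow> real \<Rightarrow> real \<Rightarrow> nat \<Rightarrow> nat \<Rightarrow> (nat \<Rightarrow> real \<times> real) \<Rightarrow> real" where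
  "infl a1 a2 b1 b2 n m \<eta> = measure_pmf.prob (colour_pmf n)
     {\<omega>. fR a1 a2 b1 b2 n \<eta> \<omega> \<noteq> fR a1 a2 b1 b2 n \<eta> (fun_upd \<omega> m (\<not> \<omega> m))}"

definition eta_space :: "real \<Rightarrow> real \<Rightarrow> real \<Rightarrow> real \<Rightarrow> nat \<Rightarrow> (nat \<Rightarrow> real \<times> real) measure" where
  "eta_space a1 a2 b1 b2 n = PiM {1..n} (\<lambda>_. uniform_measure lborel (rect a1 a2 b1 b2))"

definition filt :: "real \<Rightarrow> real \<Rightarrow> real \<Rightarrow> real \<Rightarrow> nat \<Rightarrow> nat \<Rightarrow> (nat \<Rightarrow> real \<times> real) measure" where
  "filt a1 a2 b1 b2 n m = vimage_algebra (space (eta_space a1 a2 b1 b2 n))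
      (\<lambda>\<eta>. restrict \<eta> {1..m}) (PiM {1..m} (\<lambda>_. borel))"

definition qm :: "real \<Rightarrow> real \<Rightarrow> real \<Rightarrow> real \<Rightarrow> nat \<Rightarrow> nat \<Rightarrow> (nat \<Rightarrow> real \<times> real) \<Rightarrow> real" where
  "qm a1 a2 b1 b2 n m = real_cond_exp (eta_space a1 a2 b1 b2 n) (filt a1 a2 b1 b2 n m) (qeta a1 a2 b1 b2 n)"

end

theory Submission
  imports Defs
begin


definition vcS :: "(real \<times> real) set \<Rightarrow> nat set \<Rightarrow> (nat \<Rightarrow> real \<times> real) \<Rightarrow> nat \<Rightarrow> (real \<times> real) set" where
  "vcS R S \<eta> u = {x \<in> R. \<forall>v\<in>S. dist (\<eta> u) x \<le> dist (\<eta> v) x}"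

definition crS :: "real \<Rightarrow> real \<Rightarrow> real \<Rightarrow> real \<Rightarrow> nat set \<Rightarrow> (nat \<Rightarrow> real \<times> real) \<Rightarrow> (nat \<Rightarrow> bool) \<Rightarrow> bool" where
  "crS a1 a2 b1 b2 S \<eta> \<omega> \<longleftrightarrow>
     (\<exists>\<gamma>. path \<gamma> \<and> path_image \<gamma> \<subseteq> rect a1 a2 b1 b2 \<and>
          fst (pathstart \<gamma>) = a1 \<and> fst (pathfinish \<gamma>) = b1 \<and>
          (\<forall>u\<in>S. path_image \<gamma> \<inter> vcS (rect a1 a2 b1 b2) S \<eta> u \<noteq> {} \<longrightarrow> \<omega> u))"

lemma red_crossing_crS: "red_crossing a1 a2 b1 b2 n \<eta> \<omega> = crS a1 a2 b1 b2 {1..n} \<eta> \<omega>"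
  unfolding red_crossing_def crS_def vcell_def vcS_def by simp

lemma open_crS:
  assumes "finite S"
  shows "open {\<eta>. crS a1 a2 b1 b2 S \<eta> \<omega>}"
proof (subst open_subopen, intro ballI)
  fix \<eta>0 assume "\<eta>0 \<in> {\<eta>. crS a1 a2 b1 b2 S \<eta> \<omega>}"
  then obtain \<gamma> where g: "path \<gamma>" "path_image \<gamma> \<subseteq> rect a1 a2 b1 b2"
    "fst (pathstart \<gamma>) = a1" "fst (pathfinish \<gamma>) = b1"
    "\<And>u. u\<in>S \<Longrightarrow> path_image \<gamma> \<inter> vcS (rect a1 a2 b1 b2) S \<eta>0 u \<noteq> {} \<Longrightarrow> \<omega> u"
    unfolding crS_def by blast
  let ?P = "path_image \<gamma>"
  let ?B = "{u\<in>S. \<not> \<omega> u}"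
  have ex: "\<exists>e>0. \<forall>x\<in>?P. dist (\<eta>0 u) x - infdist x (\<eta>0 ` S) \<ge> e" if u: "u \<in> ?B" for u
  proof -
    have pos: "dist (\<eta>0 u) x - infdist x (\<eta>0 ` S) > 0" if x: "x \<in> ?P" for x
    proof -
      have "x \<notin> vcS (rect a1 a2 b1 b2) S \<eta>0 u" using g(5)[of u] u x by blast
      then obtain v where v: "v \<in> S" "dist (\<eta>0 v) x < dist (\<eta>0 u) x"
        using x g(2) unfolding vcS_def by force
      have "infdist x (\<eta>0 ` S) \<le> dist x (\<eta>0 v)" using v(1) by (intro infdist_le) auto
      then show ?thesis using v(2) by (simp add: dist_commute)
    qed
    have c: "continuous_on ?P (\<lambda>x. dist (\<eta>0 u) x - infdist x (\<eta>0 ` S))"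
      by (intro continuous_intros)
    obtain x0 where x0: "x0 \<in> ?P" "\<forall>y\<in>?P. dist (\<eta>0 u) x0 - infdist x0 (\<eta>0 ` S) \<le> dist (\<eta>0 u) y - infdist y (\<eta>0 ` S)"
      using continuous_attains_inf[OF compact_path_image[OF g(1)] _ c] g(1)
      by (metis path_image_nonempty)
    show ?thesis using pos[OF x0(1)] x0(2) by blast
  qed
  then obtain e where e: "\<And>u. u \<in> ?B \<Longrightarrow> e u > 0 \<and> (\<forall>x\<in>?P. dist (\<eta>0 u) x - infdist x (\<eta>0 ` S) \<ge> e u)"
    by metis
  define \<epsilon> where "\<epsilon> = Min (insert 1 (e ` ?B))"
  have fin: "finite (insert 1 (e ` ?B))" using assms by auto
  have epos: "\<epsilon> > 0" unfolding \<epsilon>_def using fin e by (subst Min_gr_iff) auto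
  have ele: "\<epsilon> \<le> e u" if "u \<in> ?B" for u unfolding \<epsilon>_def using fin that by (intro Min_le) auto
  define T where "T = (\<Inter>i\<in>S. {\<eta>. dist (\<eta> i) (\<eta>0 i) < \<epsilon>/4})"
  have "open T" unfolding T_def
  proof (intro open_INT assms ballI)
    fix i
    have "{\<eta>. dist (\<eta> i) (\<eta>0 i) < \<epsilon>/4} = (\<lambda>\<eta>. \<eta> i) -` ball (\<eta>0 i) (\<epsilon>/4)"
      by (auto simp: dist_commute)
    also have "open \<dots>"
      by (intro open_vimage open_ball continuous_on_product_coordinates)
    finally show "open {\<eta>. dist (\<eta> i) (\<eta>0 i) < \<epsilon>/4}" .
  qed
  moreover have "\<eta>0 \<in> T" unfolding T_def using epos by auto
  moreover have "T \<subseteq> {\<eta>. crS a1 a2 b1 b2 S \<eta> \<omega>}"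
  proof
    fix \<eta> assume "\<eta> \<in> T"
    then have close: "\<And>i. i \<in> S \<Longrightarrow> dist (\<eta> i) (\<eta>0 i) < \<epsilon>/4" unfolding T_def by auto
    have "\<omega> u" if u: "u \<in> S" "?P \<inter> vcS (rect a1 a2 b1 b2) S \<eta> u \<noteq> {}" for u
    proof (rule ccontr)
      assume nu: "\<not> \<omega> u"
      then have uB: "u \<in> ?B" using u by auto
      from u obtain x where x: "x \<in> ?P" "\<And>v. v \<in> S \<Longrightarrow> dist (\<eta> u) x \<le> dist (\<eta> v) x"
        unfolding vcS_def by blast
      have le: "dist (\<eta>0 u) x - infdist x (\<eta>0 ` S) \<ge> \<epsilon>" using e[OF uB] ele[OF uB] x(1) by force
      have "infdist x (\<eta>0 ` S) < infdist x (\<eta>0 ` S) + \<epsilon>/4" using epos by simp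
      then obtain v where v: "v \<in> S" "dist x (\<eta>0 v) < infdist x (\<eta>0 ` S) + \<epsilon>/4"
        using u(1) by (subst (asm) infdist_notempty, force) (subst (asm) cINF_less_iff, auto intro: bdd_belowI[of _ 0])
      have "dist (\<eta> v) x \<le> dist (\<eta>0 v) x + dist (\<eta> v) (\<eta>0 v)" by (metis dist_commute dist_triangle)
      moreover have "dist (\<eta>0 u) x \<le> dist (\<eta> u) x + dist (\<eta> u) (\<eta>0 u)" by (metis dist_commute dist_triangle)
      ultimately have "dist (\<eta> v) x < dist (\<eta> u) x"
        using close[OF v(1)] close[OF u(1)] v(2) le epos dist_commute[of x "\<eta>0 v"] by linarith
      with x(2)[OF v(1)] show False by simp
    qed
    then show "\<eta> \<in> {\<eta>. crS a1 a2 b1 b2 S \<eta> \<omega>}" unfolding crS_def using g by blast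
  qed
  ultimately show "\<exists>T. open T \<and> \<eta>0 \<in> T \<and> T \<subseteq> {\<eta>. crS a1 a2 b1 b2 S \<eta> \<omega>}" by blast
qed




lemma sets_U: "sets (uniform_measure lborel (rect a1 a2 b1 b2)) = sets borel"
  by (simp add: uniform_measure_def)

lemma sets_eta_space: "sets (eta_space a1 a2 b1 b2 n) = sets (PiM {1..n} (\<lambda>_. borel))"
  unfolding eta_space_def by (rule sets_PiM_cong) (auto simp: sets_U)

lemma id_meas: "(\<lambda>\<eta>. \<eta>) \<in> measurable (eta_space a1 a2 b1 b2 n) (borel :: (nat \<Rightarrow> real \<times> real) measure)"
proof -
  have "(\<lambda>\<eta>. \<eta>) \<in> measurable (PiM {1..n} (\<lambda>_. borel)) (borel :: (nat \<Rightarrow> real \<times> real) measure)"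
  proof (rule measurable_coordinatewise_then_product)
    fix i :: nat
    show "(\<lambda>x. x i) \<in> borel_measurable (PiM {1..n} (\<lambda>_. borel))"
    proof (cases "i \<in> {1..n}")
      case True then show ?thesis by (rule measurable_component_singleton)
    next
      case False
      show ?thesis
        apply (rule measurable_cong[THEN iffD2, of _ _ "\<lambda>x. undefined"])
         apply (use False in \<open>auto simp: space_PiM PiE_def extensional_def\<close>)[1]
        apply (rule measurable_const)
        apply simp
        done
    qed
  qed
  then show ?thesis by (subst measurable_cong_sets[OF sets_eta_space refl])
qed

lemma open_meas:
  assumes "open X"
  shows "{\<eta> \<in> space (eta_space a1 a2 b1 b2 n). \<eta> \<in> X} \<in> sets (eta_space a1 a2 b1 b2 n)"
proof -
  have "X \<in> sets borel" using assms by simp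
  from measurable_sets[OF id_meas this] show ?thesis by (simp add: Int_def conj_commute)
qed

definition fS where "fS a1 a2 b1 b2 S \<eta> \<omega> = (if crS a1 a2 b1 b2 S \<eta> \<omega> then 1 else (0::real))"

lemma fS_meas:
  assumes "finite S"
  shows "(\<lambda>\<eta>. fS a1 a2 b1 b2 S \<eta> \<omega>) \<in> borel_measurable (eta_space a1 a2 b1 b2 n)"
proof -
  have "(\<lambda>\<eta>. fS a1 a2 b1 b2 S \<eta> \<omega>) = indicator {\<eta>. crS a1 a2 b1 b2 S \<eta> \<omega>}"
    by (auto simp: fS_def fun_eq_iff)
  moreover have "{\<eta>. crS a1 a2 b1 b2 S \<eta> \<omega>} \<inter> space (eta_space a1 a2 b1 b2 n) \<in> sets (eta_space a1 a2 b1 b2 n)"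
    using open_meas[OF open_crS[OF assms]] by (simp add: Int_def conj_commute)
  ultimately show ?thesis by (simp add: borel_measurable_indicator_iff)
qed

lemma fR_fS: "fR a1 a2 b1 b2 n \<eta> \<omega> = fS a1 a2 b1 b2 {1..n} \<eta> \<omega>"
  by (simp add: fR_def fS_def red_crossing_crS)

lemma colourings_ne: "colourings n \<noteq> {}" "finite (colourings n)"
  unfolding colourings_def by (auto simp: finite_PiE)

lemma prob_colour: "measure_pmf.prob (colour_pmf n) A = (\<Sum>\<omega>\<in>colourings n. indicator A \<omega>) / card (colourings n)"
proof -
  have "measure_pmf.prob (colour_pmf n) A = integral\<^sup>L (colour_pmf n) (indicator A)"
    by simp
  also have "\<dots> = (\<Sum>\<omega>\<in>colourings n. indicator A \<omega>) / card (colourings n)"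
    unfolding colour_pmf_def using colourings_ne by (subst integral_pmf_of_set) auto
  finally show ?thesis .
qed

lemma qeta_sum: "qeta a1 a2 b1 b2 n \<eta> = (\<Sum>\<omega>\<in>colourings n. fS a1 a2 b1 b2 {1..n} \<eta> \<omega>) / card (colourings n)"
  unfolding qeta_def prob_colour red_crossing_crS fS_def by (simp add: indicator_def of_bool_def)

lemma infl_sum: "infl a1 a2 b1 b2 n m \<eta> = (\<Sum>\<omega>\<in>colourings n.
   (if fS a1 a2 b1 b2 {1..n} \<eta> \<omega> \<noteq> fS a1 a2 b1 b2 {1..n} \<eta> (fun_upd \<omega> m (\<not> \<omega> m)) then 1 else 0)) / card (colourings n)"
  unfolding infl_def prob_colour fR_fS by (simp add: indicator_def of_bool_def)

definition qS where "qS a1 a2 b1 b2 n S \<eta> = (\<Sum>\<omega>\<in>colourings n. fS a1 a2 b1 b2 S \<eta> \<omega>) / card (colourings n)"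

lemma qS_meas: "finite S \<Longrightarrow> qS a1 a2 b1 b2 n S \<in> borel_measurable (eta_space a1 a2 b1 b2 n)"
  unfolding qS_def by (intro borel_measurable_divide borel_measurable_sum borel_measurable_const fS_meas)

lemma qeta_meas: "qeta a1 a2 b1 b2 n \<in> borel_measurable (eta_space a1 a2 b1 b2 n)"
  using qS_meas[of "{1..n}"] unfolding qS_def qeta_sum[abs_def] by simp

lemma infl_meas: "infl a1 a2 b1 b2 n m \<in> borel_measurable (eta_space a1 a2 b1 b2 n)"
proof -
  have m: "\<And>\<omega>. (\<lambda>\<eta>. fS a1 a2 b1 b2 {1..n} \<eta> \<omega>) \<in> borel_measurable (eta_space a1 a2 b1 b2 n)"
    by (rule fS_meas) simp
  show ?thesis unfolding infl_sum[abs_def]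
    by (intro borel_measurable_divide borel_measurable_sum borel_measurable_const measurable_If borel_measurable_neq m)
qed

lemma crS_cong_omega:
  assumes "\<And>u. u \<in> S \<Longrightarrow> \<omega> u = \<omega>' u"
  shows "crS a1 a2 b1 b2 S \<eta> \<omega> = crS a1 a2 b1 b2 S \<eta> \<omega>'"
proof -
  have eq: "(\<forall>u\<in>S. X u \<longrightarrow> \<omega> u) \<longleftrightarrow> (\<forall>u\<in>S. X u \<longrightarrow> \<omega>' u)" for X using assms by auto
  show ?thesis unfolding crS_def by (simp only: eq)
qed

lemma vcS_cong_eta: "(\<And>i. i \<in> S \<Longrightarrow> \<eta> i = \<eta>' i) \<Longrightarrow> u \<in> S \<Longrightarrow> vcS R S \<eta> u = vcS R S \<eta>' u"
  unfolding vcS_def by auto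

lemma crS_cong_eta:
  assumes "\<And>i. i \<in> S \<Longrightarrow> \<eta> i = \<eta>' i"
  shows "crS a1 a2 b1 b2 S \<eta> \<omega> = crS a1 a2 b1 b2 S \<eta>' \<omega>"
proof -
  have eq: "(\<forall>u\<in>S. P \<inter> vcS R S \<eta> u \<noteq> {} \<longrightarrow> \<omega> u) \<longleftrightarrow> (\<forall>u\<in>S. P \<inter> vcS R S \<eta>' u \<noteq> {} \<longrightarrow> \<omega> u)" for P R
    using vcS_cong_eta[OF assms] by simp
  show ?thesis unfolding crS_def by (simp only: eq)
qed

lemma sandwich1:
  assumes "crS a1 a2 b1 b2 {1..n} \<eta> \<omega>" "\<not> \<omega> m" "m \<in> {1..n}"
  shows "crS a1 a2 b1 b2 ({1..n} - {m}) \<eta> \<omega>"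
proof -
  let ?R = "rect a1 a2 b1 b2"
  obtain \<gamma> where g: "path \<gamma>" "path_image \<gamma> \<subseteq> ?R"
    "fst (pathstart \<gamma>) = a1" "fst (pathfinish \<gamma>) = b1"
    "\<And>u. u\<in>{1..n} \<Longrightarrow> path_image \<gamma> \<inter> vcS ?R {1..n} \<eta> u \<noteq> {} \<Longrightarrow> \<omega> u"
    using assms(1) unfolding crS_def by auto
  have W: "\<omega> u" if u: "u \<in> {1..n} - {m}" "path_image \<gamma> \<inter> vcS ?R ({1..n} - {m}) \<eta> u \<noteq> {}" for u
  proof -
    obtain x where x0: "x \<in> path_image \<gamma>" "x \<in> vcS ?R ({1..n} - {m}) \<eta> u"
      using u(2) by blast
    have x: "x \<in> path_image \<gamma>" "x \<in> ?R" "\<And>v. v \<in> {1..n} - {m} \<Longrightarrow> dist (\<eta> u) x \<le> dist (\<eta> v) x"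
      using x0 by (auto simp: vcS_def)
    show ?thesis
    proof (cases "dist (\<eta> u) x \<le> dist (\<eta> m) x")
      case True
      have "dist (\<eta> u) x \<le> dist (\<eta> v) x" if v: "v \<in> {1..n}" for v
        using x(3)[of v] v True by (cases "v = m") auto
      then have "x \<in> vcS ?R {1..n} \<eta> u" using x(2) by (simp add: vcS_def)
      then show ?thesis using g(5)[of u] u x(1) by blast
    next
      case False
      have "dist (\<eta> m) x \<le> dist (\<eta> v) x" if v: "v \<in> {1..n}" for v
      proof (cases "v = m")
        case False
        then have "dist (\<eta> u) x \<le> dist (\<eta> v) x" using x(3) v by blast
        then show ?thesis using \<open>\<not> dist (\<eta> u) x \<le> dist (\<eta> m) x\<close> by linarith
      qed simp
      then have "x \<in> vcS ?R {1..n} \<eta> m" using x(2) by (simp add: vcS_def)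
      then show ?thesis using g(5)[of m] assms(2,3) x(1) by blast
    qed
  qed
  show ?thesis unfolding crS_def
    by (rule exI[of _ \<gamma>]) (use g W in auto)
qed

lemma sandwich2:
  assumes "crS a1 a2 b1 b2 ({1..n} - {m}) \<eta> \<omega>" "\<omega> m"
  shows "crS a1 a2 b1 b2 {1..n} \<eta> \<omega>"
proof -
  let ?R = "rect a1 a2 b1 b2"
  obtain \<gamma> where g: "path \<gamma>" "path_image \<gamma> \<subseteq> ?R"
    "fst (pathstart \<gamma>) = a1" "fst (pathfinish \<gamma>) = b1"
    "\<And>u. u\<in>{1..n} - {m} \<Longrightarrow> path_image \<gamma> \<inter> vcS ?R ({1..n} - {m}) \<eta> u \<noteq> {} \<Longrightarrow> \<omega> u"
    using assms(1) unfolding crS_def by auto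
  have W: "\<omega> u" if u: "u \<in> {1..n}" "path_image \<gamma> \<inter> vcS ?R {1..n} \<eta> u \<noteq> {}" for u
  proof (cases "u = m")
    case True then show ?thesis using assms(2) by simp
  next
    case False
    have "vcS ?R {1..n} \<eta> u \<subseteq> vcS ?R ({1..n} - {m}) \<eta> u" unfolding vcS_def by auto
    then show ?thesis using g(5)[of u] u False by blast
  qed
  show ?thesis unfolding crS_def
    by (rule exI[of _ \<gamma>]) (use g W in auto)
qed

lemma pointwise_bound:
  assumes "m \<in> {1..n}"
  shows "\<bar>fS a1 a2 b1 b2 {1..n} \<eta> \<omega> - fS a1 a2 b1 b2 ({1..n} - {m}) \<eta> \<omega>\<bar>
     \<le> (if fS a1 a2 b1 b2 {1..n} \<eta> \<omega> \<noteq> fS a1 a2 b1 b2 {1..n} \<eta> (fun_upd \<omega> m (\<not> \<omega> m)) then 1 else 0)"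
proof -
  let ?J = "{1..n} - {m}"
  let ?\<omega>' = "fun_upd \<omega> m (\<not> \<omega> m)"
  have J: "crS a1 a2 b1 b2 ?J \<eta> ?\<omega>' = crS a1 a2 b1 b2 ?J \<eta> \<omega>"
    by (rule crS_cong_omega) auto
  show ?thesis
  proof (cases "\<omega> m")
    case True
    then have "\<not> ?\<omega>' m" by simp
    then have 1: "crS a1 a2 b1 b2 {1..n} \<eta> ?\<omega>' \<longrightarrow> crS a1 a2 b1 b2 ?J \<eta> \<omega>"
      using sandwich1[of a1 a2 b1 b2 n \<eta> ?\<omega>' m] J assms by blast
    have 2: "crS a1 a2 b1 b2 ?J \<eta> \<omega> \<longrightarrow> crS a1 a2 b1 b2 {1..n} \<eta> \<omega>"
      using sandwich2[of a1 a2 b1 b2 n m \<eta> \<omega>] True by blast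
    show ?thesis using 1 2 unfolding fS_def
      by (cases "crS a1 a2 b1 b2 {1..n} \<eta> ?\<omega>'"; cases "crS a1 a2 b1 b2 ?J \<eta> \<omega>"; cases "crS a1 a2 b1 b2 {1..n} \<eta> \<omega>") simp_all
  next
    case False
    then have "?\<omega>' m" by simp
    then have 1: "crS a1 a2 b1 b2 ?J \<eta> \<omega> \<longrightarrow> crS a1 a2 b1 b2 {1..n} \<eta> ?\<omega>'"
      using sandwich2[of a1 a2 b1 b2 n m \<eta> ?\<omega>'] J by blast
    have 2: "crS a1 a2 b1 b2 {1..n} \<eta> \<omega> \<longrightarrow> crS a1 a2 b1 b2 ?J \<eta> \<omega>"
      using sandwich1[of a1 a2 b1 b2 n \<eta> \<omega> m] False assms by blast
    show ?thesis using 1 2 unfolding fS_def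
      by (cases "crS a1 a2 b1 b2 {1..n} \<eta> ?\<omega>'"; cases "crS a1 a2 b1 b2 ?J \<eta> \<omega>"; cases "crS a1 a2 b1 b2 {1..n} \<eta> \<omega>") simp_all
  qed
qed

lemma q_diff_bound:
  assumes "m \<in> {1..n}"
  shows "\<bar>qeta a1 a2 b1 b2 n \<eta> - qS a1 a2 b1 b2 n ({1..n} - {m}) \<eta>\<bar> \<le> infl a1 a2 b1 b2 n m \<eta>"
proof -
  let ?C = "colourings n"
  have c: "card ?C > 0" using colourings_ne by (simp add: card_gt_0_iff)
  have "\<bar>qeta a1 a2 b1 b2 n \<eta> - qS a1 a2 b1 b2 n ({1..n} - {m}) \<eta>\<bar>
     = \<bar>\<Sum>\<omega>\<in>?C. fS a1 a2 b1 b2 {1..n} \<eta> \<omega> - fS a1 a2 b1 b2 ({1..n} - {m}) \<eta> \<omega>\<bar> / card ?C"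
    unfolding qeta_sum qS_def by (simp add: diff_divide_distrib[symmetric] sum_subtractf)
  also have "\<dots> \<le> (\<Sum>\<omega>\<in>?C. \<bar>fS a1 a2 b1 b2 {1..n} \<eta> \<omega> - fS a1 a2 b1 b2 ({1..n} - {m}) \<eta> \<omega>\<bar>) / card ?C"
    using c by (intro divide_right_mono sum_abs) auto
  also have "\<dots> \<le> infl a1 a2 b1 b2 n m \<eta>"
    unfolding infl_sum using c by (intro divide_right_mono sum_mono pointwise_bound assms) auto
  finally show ?thesis .
qed

lemma qS_cong: "(\<And>i. i \<in> S \<Longrightarrow> \<eta> i = \<eta>' i) \<Longrightarrow> qS a1 a2 b1 b2 n S \<eta> = qS a1 a2 b1 b2 n S \<eta>'"
  unfolding qS_def fS_def using crS_cong_eta by (metis (no_types, lifting))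

lemma bounds:
  "0 \<le> qeta a1 a2 b1 b2 n \<eta>" "qeta a1 a2 b1 b2 n \<eta> \<le> 1"
  "0 \<le> qS a1 a2 b1 b2 n S \<eta>" "qS a1 a2 b1 b2 n S \<eta> \<le> 1"
  "0 \<le> infl a1 a2 b1 b2 n m \<eta>" "infl a1 a2 b1 b2 n m \<eta> \<le> 1"
proof -
  let ?C = "colourings n"
  have c: "card ?C > 0" using colourings_ne by (simp add: card_gt_0_iff)
  have gen: "0 \<le> (\<Sum>\<omega>\<in>?C. g \<omega>) / card ?C \<and> (\<Sum>\<omega>\<in>?C. g \<omega>) / card ?C \<le> 1"
    if "\<And>\<omega>. 0 \<le> g \<omega> \<and> g \<omega> \<le> (1::real)" for g
  proof -
    have "(\<Sum>\<omega>\<in>?C. g \<omega>) \<le> (\<Sum>\<omega>\<in>?C. 1)" using that by (intro sum_mono) auto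
    then show ?thesis using c that by (auto simp: sum_nonneg)
  qed
  show "0 \<le> qeta a1 a2 b1 b2 n \<eta>" "qeta a1 a2 b1 b2 n \<eta> \<le> 1"
    unfolding qeta_sum using gen[of "fS a1 a2 b1 b2 {1..n} \<eta>"] by (auto simp: fS_def)
  show "0 \<le> qS a1 a2 b1 b2 n S \<eta>" "qS a1 a2 b1 b2 n S \<eta> \<le> 1"
    unfolding qS_def using gen[of "fS a1 a2 b1 b2 S \<eta>"] by (auto simp: fS_def)
  show "0 \<le> infl a1 a2 b1 b2 n m \<eta>" "infl a1 a2 b1 b2 n m \<eta> \<le> 1"
    unfolding infl_sum using gen[of "\<lambda>\<omega>. if fS a1 a2 b1 b2 {1..n} \<eta> \<omega> \<noteq> fS a1 a2 b1 b2 {1..n} \<eta> (fun_upd \<omega> m (\<not> \<omega> m)) then 1 else 0"] by auto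
qed




lemma (in prob_space) abs_integral_le:
  fixes f :: "'a \<Rightarrow> real"
  assumes "AE x in M. \<bar>f x\<bar> \<le> c" "f \<in> borel_measurable M"
  shows "\<bar>integral\<^sup>L M f\<bar> \<le> c"
proof -
  have i: "integrable M (\<lambda>x. \<bar>f x\<bar>)" using assms by (intro integrable_const_bound[where B=c]) auto
  have "\<bar>integral\<^sup>L M f\<bar> \<le> (\<integral>x. \<bar>f x\<bar> \<partial>M)" using integral_norm_bound[of M f] by simp
  also have "\<dots> \<le> c" using i assms(1) by (rule integral_le_const)
  finally show ?thesis .
qed

lemma fub:
  assumes U: "prob_space U" and AB: "A \<inter> B = {}" "finite A" "finite B"
    and phi: "\<phi> \<in> borel_measurable (PiM (A \<union> B) (\<lambda>_. U))"
    and bd: "\<And>z. z \<in> space (PiM (A \<union> B) (\<lambda>_. U)) \<Longrightarrow> \<bar>\<phi> z\<bar> \<le> (c::real)"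
  shows "(\<integral>z. \<phi> z \<partial>PiM (A \<union> B) (\<lambda>_. U)) = (\<integral>x. (\<integral>y. \<phi> (merge A B (x,y)) \<partial>PiM B (\<lambda>_. U)) \<partial>PiM A (\<lambda>_. U))"
proof -
  interpret PP: product_prob_space "\<lambda>_. U" UNIV
    using U unfolding product_prob_space_def product_prob_space_axioms_def product_sigma_finite_def
    by (auto simp: prob_space_imp_sigma_finite)
  interpret PA: prob_space "PiM A (\<lambda>_. U)" by (rule prob_space_PiM) (rule U)
  interpret PB: prob_space "PiM B (\<lambda>_. U)" by (rule prob_space_PiM) (rule U)
  interpret P2: pair_prob_space "PiM A (\<lambda>_. U)" "PiM B (\<lambda>_. U)" by unfold_locales
  have D: "distr (PiM A (\<lambda>_. U) \<Otimes>\<^sub>M PiM B (\<lambda>_. U)) (PiM (A \<union> B) (\<lambda>_. U)) (merge A B) = PiM (A \<union> B) (\<lambda>_. U)"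
    by (rule PP.distr_merge) (use AB in auto)
  have "(\<integral>z. \<phi> z \<partial>PiM (A \<union> B) (\<lambda>_. U)) = (\<integral>z. \<phi> (merge A B z) \<partial>(PiM A (\<lambda>_. U) \<Otimes>\<^sub>M PiM B (\<lambda>_. U)))"
    by (subst D[symmetric]) (rule integral_distr[OF measurable_merge phi])
  also have "\<dots> = (\<integral>x. (\<integral>y. \<phi> (merge A B (x,y)) \<partial>PiM B (\<lambda>_. U)) \<partial>PiM A (\<lambda>_. U))"
  proof (rule P2.integral_fst'[symmetric, of "\<lambda>z. \<phi> (merge A B z)", simplified])
    show "integrable (PiM A (\<lambda>_. U) \<Otimes>\<^sub>M PiM B (\<lambda>_. U)) (\<lambda>z. \<phi> (merge A B z))"
    proof (rule P2.P.integrable_const_bound[where B=c])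
      show "(\<lambda>z. \<phi> (merge A B z)) \<in> borel_measurable (PiM A (\<lambda>_. U) \<Otimes>\<^sub>M PiM B (\<lambda>_. U))"
        by (rule measurable_comp[OF measurable_merge phi, unfolded comp_def])
      show "AE z in PiM A (\<lambda>_. U) \<Otimes>\<^sub>M PiM B (\<lambda>_. U). norm (\<phi> (merge A B z)) \<le> c"
        by (intro AE_I2) (auto intro!: bd measurable_space[OF measurable_merge])
    qed
  qed
  finally show ?thesis .
qed

lemma cond_L2:
  fixes Y :: "'a \<Rightarrow> real"
  assumes P: "prob_space M" and sub: "subalgebra M F" and Y: "Y \<in> borel_measurable M"
    and bd: "AE x in M. \<bar>Y x\<bar> \<le> c"
  shows "(\<integral>x. (Y x - real_cond_exp M F Y x)\<^sup>2 \<partial>M) = (\<integral>x. (Y x)\<^sup>2 \<partial>M) - (\<integral>x. (real_cond_exp M F Y x)\<^sup>2 \<partial>M)"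
    and "AE x in M. \<bar>real_cond_exp M F Y x\<bar> \<le> c"
proof -
  interpret prob_space M by (rule P)
  interpret finite_measure_subalgebra M F by unfold_locales (rule sub)
  have [measurable]: "Y \<in> borel_measurable M" by (rule Y)
  have iY: "integrable M Y" using bd Y by (intro integrable_const_bound[where B=c]) auto
  let ?C = "real_cond_exp M F Y"
  have [measurable]: "?C \<in> borel_measurable M" by simp
  have [measurable]: "?C \<in> borel_measurable F" by simp
  have bdC: "AE x in M. \<bar>?C x\<bar> \<le> c"
  proof -
    have "AE x in M. ?C x \<le> c" using bd by (intro real_cond_exp_le_c[OF iY]) auto
    moreover have "AE x in M. ?C x \<ge> -c" using bd by (intro real_cond_exp_ge_c[OF iY]) auto
    ultimately show ?thesis by eventually_elim auto
  qed
  then show "AE x in M. \<bar>real_cond_exp M F Y x\<bar> \<le> c" .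
  have bprod: "AE x in M. \<bar>f x * g x\<bar> \<le> c * c" if "AE x in M. \<bar>f x\<bar> \<le> c" "AE x in M. \<bar>g x\<bar> \<le> c" for f g
    using that by eventually_elim (auto simp: abs_mult intro: mult_mono')
  have iCY: "integrable M (\<lambda>x. ?C x * Y x)"
    using bprod[OF bdC bd] by (intro integrable_const_bound[where B="c*c"]) auto
  have iCC: "integrable M (\<lambda>x. ?C x * ?C x)"
    using bprod[OF bdC bdC] by (intro integrable_const_bound[where B="c*c"]) auto
  have iYY: "integrable M (\<lambda>x. Y x * Y x)"
    using bprod[OF bd bd] by (intro integrable_const_bound[where B="c*c"]) auto
  have orth: "(\<integral>x. ?C x * ?C x \<partial>M) = (\<integral>x. ?C x * Y x \<partial>M)"
    by (rule real_cond_exp_intg(2)[OF iCY]) auto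
  have "(\<integral>x. (Y x - ?C x)\<^sup>2 \<partial>M) = (\<integral>x. Y x * Y x - 2 * (?C x * Y x) + ?C x * ?C x \<partial>M)"
  proof -
    have "(\<lambda>x. (Y x - ?C x)\<^sup>2) = (\<lambda>x. Y x * Y x - 2 * (?C x * Y x) + ?C x * ?C x)"
      by (auto simp: power2_eq_square algebra_simps)
    then show ?thesis by simp
  qed
  also have "\<dots> = (\<integral>x. Y x * Y x \<partial>M) - 2 * (\<integral>x. ?C x * Y x \<partial>M) + (\<integral>x. ?C x * ?C x \<partial>M)"
    using iCY iCC iYY by simp
  also have "\<dots> = (\<integral>x. (Y x)\<^sup>2 \<partial>M) - (\<integral>x. (?C x)\<^sup>2 \<partial>M)"
    using orth by (simp add: power2_eq_square)
  finally show "(\<integral>x. (Y x - real_cond_exp M F Y x)\<^sup>2 \<partial>M) = (\<integral>x. (Y x)\<^sup>2 \<partial>M) - (\<integral>x. (real_cond_exp M F Y x)\<^sup>2 \<partial>M)" .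
qed

lemma cond_formula:
  fixes g :: "(nat \<Rightarrow> 'b::topological_space) \<Rightarrow> real" and U :: "'b measure"
  assumes U: "prob_space U" "sets U = sets borel"
    and KL: "K \<inter> L = {}" "finite K" "finite L"
    and g: "g \<in> borel_measurable (PiM (K \<union> L) (\<lambda>_. U))"
    and bd: "\<And>z. z \<in> space (PiM (K \<union> L) (\<lambda>_. U)) \<Longrightarrow> \<bar>g z\<bar> \<le> c"
  shows "AE \<eta> in PiM (K \<union> L) (\<lambda>_. U).
     real_cond_exp (PiM (K \<union> L) (\<lambda>_. U)) (vimage_algebra (space (PiM (K \<union> L) (\<lambda>_. U))) (\<lambda>\<eta>. restrict \<eta> K) (PiM K (\<lambda>_. borel))) g \<eta>
       = (\<integral>\<xi>. g (merge K L (\<eta>, \<xi>)) \<partial>PiM L (\<lambda>_. U))"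
proof -
  define M where "M = PiM (K \<union> L) (\<lambda>_. U)"
  define F where "F = vimage_algebra (space M) (\<lambda>\<eta>. restrict \<eta> K) (PiM K (\<lambda>_. borel))"
  interpret prob_space M unfolding M_def by (rule prob_space_PiM) (rule U)
  interpret PK: prob_space "PiM K (\<lambda>_. U)" by (rule prob_space_PiM) (rule U)
  interpret PL: prob_space "PiM L (\<lambda>_. U)" by (rule prob_space_PiM) (rule U)
  interpret P2: pair_prob_space "PiM K (\<lambda>_. U)" "PiM L (\<lambda>_. U)" by unfold_locales
  have setsK: "sets (PiM K (\<lambda>_. U)) = sets (PiM K (\<lambda>_. borel))"
    by (rule sets_PiM_cong) (auto simp: U)
  have rK: "(\<lambda>\<eta>. restrict \<eta> K) \<in> space M \<rightarrow> space (PiM K (\<lambda>_. borel))"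
    by (auto simp: space_PiM)
  have rKm: "(\<lambda>\<eta>. restrict \<eta> K) \<in> measurable M (PiM K (\<lambda>_. borel))"
  proof -
    have "(\<lambda>\<eta>. restrict \<eta> K) \<in> measurable M (PiM K (\<lambda>_. U))"
      unfolding M_def by (rule measurable_restrict_subset) auto
    then show ?thesis by (subst measurable_cong_sets[OF refl setsK[symmetric]])
  qed
  have sub: "subalgebra M F"
    unfolding subalgebra_def F_def
  proof
    show "space (vimage_algebra (space M) (\<lambda>\<eta>. restrict \<eta> K) (PiM K (\<lambda>_. borel))) = space M" by simp
    show "sets (vimage_algebra (space M) (\<lambda>\<eta>. restrict \<eta> K) (PiM K (\<lambda>_. borel))) \<subseteq> sets M"
      unfolding sets_vimage_algebra2[OF rK] using measurable_sets[OF rKm] by auto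
  qed
  interpret finite_measure_subalgebra M F by unfold_locales (rule sub)
  have gm[measurable]: "g \<in> borel_measurable M" using g unfolding M_def .
  define h' where "h' x = (\<integral>\<xi>. g (merge K L (x, \<xi>)) \<partial>PiM L (\<lambda>_. U))" for x
  have h'm: "h' \<in> borel_measurable (PiM K (\<lambda>_. U))"
  proof -
    have "(\<lambda>z. g (merge K L z)) \<in> borel_measurable (PiM K (\<lambda>_. U) \<Otimes>\<^sub>M PiM L (\<lambda>_. U))"
      by (rule measurable_comp[OF measurable_merge g, unfolded comp_def])
    then have "case_prod (\<lambda>x \<xi>. g (merge K L (x, \<xi>))) \<in> borel_measurable (PiM K (\<lambda>_. U) \<Otimes>\<^sub>M PiM L (\<lambda>_. U))"
      by (simp add: case_prod_beta')
    then show ?thesis unfolding h'_def by (rule PL.borel_measurable_lebesgue_integral)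
  qed
  have h'K: "h' \<in> borel_measurable (PiM K (\<lambda>_. borel))"
    using h'm by (subst measurable_cong_sets[OF setsK[symmetric] refl])
  have merge_sp: "merge K L (x, \<xi>) \<in> space M" if "x \<in> space (PiM K (\<lambda>_. U))" "\<xi> \<in> space (PiM L (\<lambda>_. U))" for x \<xi>
    using measurable_space[OF measurable_merge, of "(x, \<xi>)" K "\<lambda>_. U" L] that
    unfolding M_def by (simp add: space_pair_measure)
  have h'bd: "\<bar>h' x\<bar> \<le> c" if x: "x \<in> space (PiM K (\<lambda>_. U))" for x
    unfolding h'_def
  proof (rule PL.abs_integral_le)
    show "AE \<xi> in PiM L (\<lambda>_. U). \<bar>g (merge K L (x, \<xi>))\<bar> \<le> c"
      by (intro AE_I2 bd merge_sp[OF x, unfolded M_def])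
    show "(\<lambda>\<xi>. g (merge K L (x, \<xi>))) \<in> borel_measurable (PiM L (\<lambda>_. U))"
      using measurable_comp[OF measurable_comp[OF measurable_Pair1'[OF x] measurable_merge] g]
      by (simp add: comp_def)
  qed
  define h where "h \<eta> = h' (restrict \<eta> K)" for \<eta>
  have hF: "h \<in> borel_measurable F"
    unfolding h_def F_def by (rule measurable_comp[OF measurable_vimage_algebra1[OF rK] h'K, unfolded comp_def])
  have hM[measurable]: "h \<in> borel_measurable M" by (rule measurable_from_subalg[OF sub hF])
  have h_eq: "h \<eta> = (\<integral>\<xi>. g (merge K L (\<eta>, \<xi>)) \<partial>PiM L (\<lambda>_. U))" for \<eta>
    unfolding h_def h'_def by simp
  have rK_sp: "restrict \<eta> K \<in> space (PiM K (\<lambda>_. U))" if "\<eta> \<in> space M" for \<eta>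
    using that unfolding M_def by (auto simp: space_PiM)
  have hbd: "\<bar>h \<eta>\<bar> \<le> c" if "\<eta> \<in> space M" for \<eta>
    unfolding h_def using h'bd[OF rK_sp[OF that]] .
  have ig: "integrable M g" by (intro integrable_const_bound[where B=c] AE_I2 gm) (auto intro: bd simp: M_def)
  have ih: "integrable M h" by (intro integrable_const_bound[where B=c] AE_I2) (auto intro: hbd)
  have "AE \<eta> in M. real_cond_exp M F g \<eta> = h \<eta>"
  proof (rule real_cond_exp_charact[OF _ ig ih hF])
    fix A assume A: "A \<in> sets F"
    then obtain B where B: "B \<in> sets (PiM K (\<lambda>_. borel))" "A = (\<lambda>\<eta>. restrict \<eta> K) -` B \<inter> space M"
      unfolding F_def sets_vimage_algebra2[OF rK] by blast
    have AM: "A \<in> sets M" using A sub unfolding subalgebra_def by auto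
    have key: "(\<integral>z. indicator A z * f z \<partial>M) = (\<integral>x. indicator B x * h' x \<partial>PiM K (\<lambda>_. U))"
      if fm: "f \<in> borel_measurable M" and fbd: "\<And>z. z \<in> space M \<Longrightarrow> \<bar>f z\<bar> \<le> c"
        and finner: "\<And>x. x \<in> space (PiM K (\<lambda>_. U)) \<Longrightarrow> (\<integral>\<xi>. f (merge K L (x, \<xi>)) \<partial>PiM L (\<lambda>_. U)) = h' x"
      for f
    proof -
      have "(\<integral>z. indicator A z * f z \<partial>M) = (\<integral>x. (\<integral>\<xi>. indicator A (merge K L (x, \<xi>)) * f (merge K L (x, \<xi>)) \<partial>PiM L (\<lambda>_. U)) \<partial>PiM K (\<lambda>_. U))"
        unfolding M_def
      proof (rule fub[OF U(1) KL])
        show "(\<lambda>z. indicator A z * f z) \<in> borel_measurable (PiM (K \<union> L) (\<lambda>_. U))"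
          using AM fm unfolding M_def by (intro borel_measurable_times borel_measurable_indicator) auto
        fix z assume "z \<in> space (PiM (K \<union> L) (\<lambda>_. U))"
        then show "\<bar>indicator A z * f z\<bar> \<le> c" using fbd[of z] unfolding M_def
          by (auto simp: indicator_def)
      qed
      also have "\<dots> = (\<integral>x. indicator B x * h' x \<partial>PiM K (\<lambda>_. U))"
      proof (rule Bochner_Integration.integral_cong[OF refl])
        fix x assume x: "x \<in> space (PiM K (\<lambda>_. U))"
        have "(\<integral>\<xi>. indicator A (merge K L (x, \<xi>)) * f (merge K L (x, \<xi>)) \<partial>PiM L (\<lambda>_. U))
            = (\<integral>\<xi>. indicator B x * f (merge K L (x, \<xi>)) \<partial>PiM L (\<lambda>_. U))"
        proof (rule Bochner_Integration.integral_cong[OF refl])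
          fix \<xi> assume \<xi>: "\<xi> \<in> space (PiM L (\<lambda>_. U))"
          have "restrict (merge K L (x, \<xi>)) K = x"
            using KL(1) x by (simp add: space_PiM)
          then show "indicator A (merge K L (x, \<xi>)) * f (merge K L (x, \<xi>)) = indicator B x * f (merge K L (x, \<xi>))"
            using merge_sp[OF x \<xi>] B(2) by (simp add: indicator_def)
        qed
        also have "\<dots> = indicator B x * h' x" using finner[OF x] by simp
        finally show "(\<integral>\<xi>. indicator A (merge K L (x, \<xi>)) * f (merge K L (x, \<xi>)) \<partial>PiM L (\<lambda>_. U)) = indicator B x * h' x" .
      qed
      finally show ?thesis .
    qed
    have "(\<integral>z. indicator A z * g z \<partial>M) = (\<integral>x. indicator B x * h' x \<partial>PiM K (\<lambda>_. U))"
    proof (rule key[OF gm])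
      show "\<And>z. z \<in> space M \<Longrightarrow> \<bar>g z\<bar> \<le> c" using bd unfolding M_def .
    qed (simp add: h'_def)
    moreover have "(\<integral>z. indicator A z * h z \<partial>M) = (\<integral>x. indicator B x * h' x \<partial>PiM K (\<lambda>_. U))"
    proof (rule key[OF hM hbd])
      fix x assume x: "x \<in> space (PiM K (\<lambda>_. U))"
      have "(\<integral>\<xi>. h (merge K L (x, \<xi>)) \<partial>PiM L (\<lambda>_. U)) = (\<integral>\<xi>. h' x \<partial>PiM L (\<lambda>_. U))"
      proof (rule Bochner_Integration.integral_cong[OF refl])
        fix \<xi> assume \<xi>: "\<xi> \<in> space (PiM L (\<lambda>_. U))"
        have "restrict (merge K L (x, \<xi>)) K = x"
          using KL(1) x by (simp add: space_PiM)
        then show "h (merge K L (x, \<xi>)) = h' x" unfolding h_def by simp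
      qed
      also have "\<dots> = h' x" by (simp add: PL.prob_space)
      finally show "(\<integral>\<xi>. h (merge K L (x, \<xi>)) \<partial>PiM L (\<lambda>_. U)) = h' x" .
    qed simp
    ultimately show "(\<integral>x\<in>A. g x \<partial>M) = (\<integral>x\<in>A. h x \<partial>M)"
      unfolding set_lebesgue_integral_def by simp
  qed
  then show ?thesis unfolding M_def F_def h_eq by simp
qed




lemma U_prob:
  assumes "a1 < b1" "a2 < b2"
  shows "prob_space (uniform_measure lborel (rect a1 a2 b1 b2))"
proof (rule prob_space_uniform_measure)
  have "emeasure lborel (rect a1 a2 b1 b2) = ennreal ((b1 - a1) * (b2 - a2))"
    using assms unfolding rect_def
    by (simp add: emeasure_lborel_cbox_eq Basis_prod_def inner_prod_def)
  then show "emeasure lborel (rect a1 a2 b1 b2) \<noteq> 0" "emeasure lborel (rect a1 a2 b1 b2) \<noteq> \<infinity>"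
    using assms by auto
qed

lemma eta_space_U: "eta_space a1 a2 b1 b2 n = PiM {1..n} (\<lambda>_. uniform_measure lborel (rect a1 a2 b1 b2))"
  unfolding eta_space_def ..

lemma restrict_into: "(\<lambda>\<eta>. restrict \<eta> K) \<in> X \<rightarrow> space (PiM K (\<lambda>_. (borel :: (real \<times> real) measure)))"
  by (auto simp: space_PiM)

lemma restrict_meas:
  assumes "k \<le> n"
  shows "(\<lambda>\<eta>. restrict \<eta> {1..k}) \<in> measurable (eta_space a1 a2 b1 b2 n) (PiM {1..k} (\<lambda>_. (borel :: (real \<times> real) measure)))"
proof -
  have "(\<lambda>\<eta>. restrict \<eta> {1..k}) \<in> measurable (PiM {1..n} (\<lambda>_. (borel :: (real \<times> real) measure))) (PiM {1..k} (\<lambda>_. borel))"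
    by (rule measurable_restrict_subset) (use assms in auto)
  then show ?thesis by (subst measurable_cong_sets[OF sets_eta_space refl])
qed

lemma sub_filt:
  assumes "k \<le> n"
  shows "subalgebra (eta_space a1 a2 b1 b2 n) (filt a1 a2 b1 b2 n k)"
  unfolding subalgebra_def filt_def
proof
  show "space (vimage_algebra (space (eta_space a1 a2 b1 b2 n)) (\<lambda>\<eta>. restrict \<eta> {1..k}) (PiM {1..k} (\<lambda>_. borel))) = space (eta_space a1 a2 b1 b2 n)" by simp
  show "sets (vimage_algebra (space (eta_space a1 a2 b1 b2 n)) (\<lambda>\<eta>. restrict \<eta> {1..k}) (PiM {1..k} (\<lambda>_. borel))) \<subseteq> sets (eta_space a1 a2 b1 b2 n)"
    unfolding sets_vimage_algebra2[OF restrict_into] using measurable_sets[OF restrict_meas[OF assms]] by auto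
qed

lemma sub_filt_nested:
  assumes "k \<le> l"
  shows "subalgebra (filt a1 a2 b1 b2 n l) (filt a1 a2 b1 b2 n k)"
  unfolding subalgebra_def filt_def
proof
  let ?X = "space (eta_space a1 a2 b1 b2 n)"
  show "space (vimage_algebra ?X (\<lambda>\<eta>. restrict \<eta> {1..k}) (PiM {1..k} (\<lambda>_. borel))) = space (vimage_algebra ?X (\<lambda>\<eta>. restrict \<eta> {1..l}) (PiM {1..l} (\<lambda>_. (borel :: (real \<times> real) measure))))" by simp
  show "sets (vimage_algebra ?X (\<lambda>\<eta>. restrict \<eta> {1..k}) (PiM {1..k} (\<lambda>_. borel))) \<subseteq> sets (vimage_algebra ?X (\<lambda>\<eta>. restrict \<eta> {1..l}) (PiM {1..l} (\<lambda>_. (borel :: (real \<times> real) measure))))"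
  proof
    fix A assume "A \<in> sets (vimage_algebra ?X (\<lambda>\<eta>. restrict \<eta> {1..k}) (PiM {1..k} (\<lambda>_. borel)))"
    then obtain B where B: "B \<in> sets (PiM {1..k} (\<lambda>_. (borel :: (real \<times> real) measure)))" "A = (\<lambda>\<eta>. restrict \<eta> {1..k}) -` B \<inter> ?X"
      unfolding sets_vimage_algebra2[OF restrict_into] by blast
    have rm: "(\<lambda>f. restrict f {1..k}) \<in> measurable (PiM {1..l} (\<lambda>_. (borel :: (real \<times> real) measure))) (PiM {1..k} (\<lambda>_. borel))"
      by (rule measurable_restrict_subset) (use assms in auto)
    define B' where "B' = (\<lambda>f. restrict f {1..k}) -` B \<inter> space (PiM {1..l} (\<lambda>_. (borel :: (real \<times> real) measure)))"
    have B': "B' \<in> sets (PiM {1..l} (\<lambda>_. (borel :: (real \<times> real) measure)))"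
      unfolding B'_def by (rule measurable_sets[OF rm B(1)])
    have "A = (\<lambda>\<eta>. restrict \<eta> {1..l}) -` B' \<inter> ?X"
      unfolding B(2) B'_def using assms by (auto simp: space_PiM)
    then show "A \<in> sets (vimage_algebra ?X (\<lambda>\<eta>. restrict \<eta> {1..l}) (PiM {1..l} (\<lambda>_. (borel :: (real \<times> real) measure))))"
      unfolding sets_vimage_algebra2[OF restrict_into] using B' by blast
  qed
qed

lemma cf_k:
  assumes ab: "a1 < b1" "a2 < b2" and k: "k \<le> n" and S: "finite S"
  shows "AE \<eta> in eta_space a1 a2 b1 b2 n. real_cond_exp (eta_space a1 a2 b1 b2 n) (filt a1 a2 b1 b2 n k) (qS a1 a2 b1 b2 n S) \<eta>
     = (\<integral>\<xi>. qS a1 a2 b1 b2 n S (merge {1..k} {k<..n} (\<eta>, \<xi>)) \<partial>PiM {k<..n} (\<lambda>_. uniform_measure lborel (rect a1 a2 b1 b2)))"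
proof -
  have e: "{1..k} \<union> {k<..n} = {1..n}" using k by auto
  have "AE \<eta> in PiM ({1..k} \<union> {k<..n}) (\<lambda>_. uniform_measure lborel (rect a1 a2 b1 b2)).
     real_cond_exp (PiM ({1..k} \<union> {k<..n}) (\<lambda>_. uniform_measure lborel (rect a1 a2 b1 b2)))
       (vimage_algebra (space (PiM ({1..k} \<union> {k<..n}) (\<lambda>_. uniform_measure lborel (rect a1 a2 b1 b2)))) (\<lambda>\<eta>. restrict \<eta> {1..k}) (PiM {1..k} (\<lambda>_. borel)))
       (qS a1 a2 b1 b2 n S) \<eta>
     = (\<integral>\<xi>. qS a1 a2 b1 b2 n S (merge {1..k} {k<..n} (\<eta>, \<xi>)) \<partial>PiM {k<..n} (\<lambda>_. uniform_measure lborel (rect a1 a2 b1 b2)))"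
  proof (rule cond_formula[OF U_prob[OF ab] sets_U])
    show "qS a1 a2 b1 b2 n S \<in> borel_measurable (PiM ({1..k} \<union> {k<..n}) (\<lambda>_. uniform_measure lborel (rect a1 a2 b1 b2)))"
      using qS_meas[OF S, of a1 a2 b1 b2 n] unfolding e eta_space_U .
    show "\<bar>qS a1 a2 b1 b2 n S z\<bar> \<le> 1" for z using bounds(3,4)[of a1 a2 b1 b2 n S z] by simp
  qed auto
  then show ?thesis unfolding e filt_def eta_space_U .
qed

lemma indep_step:
  assumes ab: "a1 < b1" "a2 < b2" and m: "1 \<le> m" "m \<le> n"
  shows "AE \<eta> in eta_space a1 a2 b1 b2 n.
    real_cond_exp (eta_space a1 a2 b1 b2 n) (filt a1 a2 b1 b2 n m) (qS a1 a2 b1 b2 n ({1..n} - {m})) \<eta>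
  = real_cond_exp (eta_space a1 a2 b1 b2 n) (filt a1 a2 b1 b2 n (m - 1)) (qS a1 a2 b1 b2 n ({1..n} - {m})) \<eta>"
proof -
  let ?U = "uniform_measure lborel (rect a1 a2 b1 b2)"
  let ?J = "{1..n} - {m}"
  let ?q = "qS a1 a2 b1 b2 n ?J"
  have fJ: "finite ?J" by simp
  have U: "prob_space ?U" by (rule U_prob[OF ab])
  have eq: "(\<integral>\<xi>. ?q (merge {1..m} {m<..n} (\<eta>, \<xi>)) \<partial>PiM {m<..n} (\<lambda>_. ?U))
      = (\<integral>\<zeta>. ?q (merge {1..m-1} {m-1<..n} (\<eta>, \<zeta>)) \<partial>PiM {m-1<..n} (\<lambda>_. ?U))"
    if \<eta>: "\<eta> \<in> space (eta_space a1 a2 b1 b2 n)" for \<eta>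
  proof -
    interpret PL: prob_space "PiM {m<..n} (\<lambda>_. ?U)" by (rule prob_space_PiM) (rule U)
    interpret Pm: prob_space "PiM {m} (\<lambda>_. ?U)" by (rule prob_space_PiM) (rule U)
    have L': "{m-1<..n} = {m} \<union> {m<..n}" using m by auto
    have e': "{1..m-1} \<union> {m-1<..n} = {1..n}" using m by auto
    have r\<eta>: "restrict \<eta> {1..m-1} \<in> space (PiM {1..m-1} (\<lambda>_. ?U))"
      using \<eta> m unfolding eta_space_U by (auto simp: space_PiM)
    have qm': "?q \<in> borel_measurable (PiM ({1..m-1} \<union> {m-1<..n}) (\<lambda>_. ?U))"
      using qS_meas[OF fJ, of a1 a2 b1 b2 n] unfolding e' eta_space_U .
    have phim: "(\<lambda>\<zeta>. ?q (merge {1..m-1} {m-1<..n} (\<eta>, \<zeta>))) \<in> borel_measurable (PiM {m-1<..n} (\<lambda>_. ?U))"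
      using measurable_comp[OF measurable_comp[OF measurable_Pair1'[OF r\<eta>] measurable_merge] qm']
      by (simp add: comp_def)
    have "(\<integral>\<zeta>. ?q (merge {1..m-1} {m-1<..n} (\<eta>, \<zeta>)) \<partial>PiM {m-1<..n} (\<lambda>_. ?U))
        = (\<integral>a. (\<integral>\<xi>. ?q (merge {1..m-1} {m-1<..n} (\<eta>, merge {m} {m<..n} (a, \<xi>))) \<partial>PiM {m<..n} (\<lambda>_. ?U)) \<partial>PiM {m} (\<lambda>_. ?U))"
      unfolding L'
    proof (rule fub[OF U])
      show "(\<lambda>\<zeta>. ?q (merge {1..m-1} ({m} \<union> {m<..n}) (\<eta>, \<zeta>))) \<in> borel_measurable (PiM ({m} \<union> {m<..n}) (\<lambda>_. ?U))"
        using phim unfolding L' .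
      show "\<bar>?q (merge {1..m-1} ({m} \<union> {m<..n}) (\<eta>, z))\<bar> \<le> 1" for z
        using bounds(3,4)[of a1 a2 b1 b2 n ?J] by (simp add: abs_le_iff)
    qed auto
    also have "\<dots> = (\<integral>a. (\<integral>\<xi>. ?q (merge {1..m} {m<..n} (\<eta>, \<xi>)) \<partial>PiM {m<..n} (\<lambda>_. ?U)) \<partial>PiM {m} (\<lambda>_. ?U))"
    proof (rule Bochner_Integration.integral_cong[OF refl])
      fix a assume "a \<in> space (PiM {m} (\<lambda>_. ?U))"
      show "(\<integral>\<xi>. ?q (merge {1..m-1} {m-1<..n} (\<eta>, merge {m} {m<..n} (a, \<xi>))) \<partial>PiM {m<..n} (\<lambda>_. ?U))
          = (\<integral>\<xi>. ?q (merge {1..m} {m<..n} (\<eta>, \<xi>)) \<partial>PiM {m<..n} (\<lambda>_. ?U))"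
      proof (rule Bochner_Integration.integral_cong[OF refl])
        fix \<xi>
        show "?q (merge {1..m-1} {m-1<..n} (\<eta>, merge {m} {m<..n} (a, \<xi>))) = ?q (merge {1..m} {m<..n} (\<eta>, \<xi>))"
          by (rule qS_cong) (use m in \<open>auto simp: merge_def\<close>)
      qed
    qed
    also have "\<dots> = (\<integral>\<xi>. ?q (merge {1..m} {m<..n} (\<eta>, \<xi>)) \<partial>PiM {m<..n} (\<lambda>_. ?U))"
      by (simp add: Pm.prob_space)
    finally show ?thesis by simp
  qed
  have m1: "m - 1 \<le> n" using m by simp
  have AEeq: "AE \<eta> in eta_space a1 a2 b1 b2 n. (\<integral>\<xi>. ?q (merge {1..m} {m<..n} (\<eta>, \<xi>)) \<partial>PiM {m<..n} (\<lambda>_. ?U))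
      = (\<integral>\<zeta>. ?q (merge {1..m-1} {m-1<..n} (\<eta>, \<zeta>)) \<partial>PiM {m-1<..n} (\<lambda>_. ?U))"
    by (rule AE_I2) (rule eq)
  show ?thesis
    using cf_k[OF ab m(2) fJ] cf_k[OF ab m1 fJ] AEeq
    by eventually_elim simp
qed




theorem lemma2p4:
  fixes a1 a2 b1 b2 :: real and n m :: nat
  assumes "a1 < b1" and "a2 < b2" and "1 \<le> m" and "m \<le> n"
  shows "prob_space.variance (eta_space a1 a2 b1 b2 n)
           (\<lambda>\<eta>. qm a1 a2 b1 b2 n m \<eta> - qm a1 a2 b1 b2 n (m - 1) \<eta>)
         \<le> prob_space.expectation (eta_space a1 a2 b1 b2 n)
           (\<lambda>\<eta>. (infl a1 a2 b1 b2 n m \<eta>)\<^sup>2)"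
proof -
  define M where "M = eta_space a1 a2 b1 b2 n"
  define F where "F k = filt a1 a2 b1 b2 n k" for k
  define q where "q = qeta a1 a2 b1 b2 n"
  define q' where "q' = qS a1 a2 b1 b2 n ({1..n} - {m})"
  define Z where "Z \<eta> = q \<eta> - q' \<eta>" for \<eta>
  define I where "I = infl a1 a2 b1 b2 n m"
  have ab: "a1 < b1" "a2 < b2" using assms by auto
  have PM: "prob_space M" unfolding M_def eta_space_U by (rule prob_space_PiM) (rule U_prob[OF ab])
  interpret prob_space M by (rule PM)
  have m1: "m - 1 \<le> n" "m \<le> n" using assms by auto
  have subm: "subalgebra M (F m)" unfolding M_def F_def by (rule sub_filt[OF m1(2)])
  have subm1: "subalgebra M (F (m-1))" unfolding M_def F_def by (rule sub_filt[OF m1(1)])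
  have nest: "subalgebra (F m) (F (m-1))" unfolding F_def by (rule sub_filt_nested) simp
  interpret Sm: finite_measure_subalgebra M "F m" by unfold_locales (rule subm)
  interpret Sm1: finite_measure_subalgebra M "F (m-1)" by unfold_locales (rule subm1)
  have qm[measurable]: "q \<in> borel_measurable M" unfolding q_def M_def by (rule qeta_meas)
  have q'm[measurable]: "q' \<in> borel_measurable M" unfolding q'_def M_def by (rule qS_meas) simp
  have Zm[measurable]: "Z \<in> borel_measurable M" unfolding Z_def by measurable
  have Im[measurable]: "I \<in> borel_measurable M" unfolding I_def M_def by (rule infl_meas)
  have qb: "\<bar>q x\<bar> \<le> 1" for x unfolding q_def using bounds(1,2)[of a1 a2 b1 b2 n x] by simp
  have q'b: "\<bar>q' x\<bar> \<le> 1" for x unfolding q'_def using bounds(3,4)[of a1 a2 b1 b2 n "{1..n} - {m}" x] by simp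
  have Zb: "\<bar>Z x\<bar> \<le> I x" for x unfolding Z_def q_def q'_def I_def
    by (rule q_diff_bound) (use assms in auto)
  have Ib: "0 \<le> I x" "I x \<le> 1" for x unfolding I_def using bounds(5,6) by auto
  have Zb1: "\<bar>Z x\<bar> \<le> 1" for x using Zb[of x] Ib[of x] by simp
  have iq: "integrable M q" by (intro integrable_const_bound[where B=1] AE_I2) (auto simp: qb)
  have iq': "integrable M q'" by (intro integrable_const_bound[where B=1] AE_I2) (auto simp: q'b)
  have iZ: "integrable M Z" by (intro integrable_const_bound[where B=1] AE_I2) (auto simp: Zb1)
  have qsplit: "q = (\<lambda>x. Z x + q' x)" unfolding Z_def by auto
  let ?A = "real_cond_exp M (F m) Z"
  let ?B = "real_cond_exp M (F (m-1)) Z"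
  let ?X = "\<lambda>\<eta>. qm a1 a2 b1 b2 n m \<eta> - qm a1 a2 b1 b2 n (m - 1) \<eta>"
  have qmM: "qm a1 a2 b1 b2 n k = real_cond_exp M (F k) q" for k
    unfolding qm_def M_def F_def q_def ..
  have Xdef: "?X = (\<lambda>\<eta>. real_cond_exp M (F m) q \<eta> - real_cond_exp M (F (m-1)) q \<eta>)"
    unfolding qmM ..
  have Xm[measurable]: "?X \<in> borel_measurable M" unfolding Xdef by measurable
  have ind: "AE \<eta> in M. real_cond_exp M (F m) q' \<eta> = real_cond_exp M (F (m-1)) q' \<eta>"
    unfolding M_def F_def q'_def by (rule indep_step) (use assms in auto)
  have aq1: "AE \<eta> in M. real_cond_exp M (F m) q \<eta> = ?A \<eta> + real_cond_exp M (F m) q' \<eta>"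
    unfolding qsplit by (rule Sm.real_cond_exp_add[OF iZ iq'])
  have aq2: "AE \<eta> in M. real_cond_exp M (F (m-1)) q \<eta> = ?B \<eta> + real_cond_exp M (F (m-1)) q' \<eta>"
    unfolding qsplit by (rule Sm1.real_cond_exp_add[OF iZ iq'])
  have AEX: "AE \<eta> in M. ?X \<eta> = ?A \<eta> - ?B \<eta>"
    using ind aq1 aq2 by eventually_elim (simp add: qmM)
  have EX: "expectation ?X = 0"
  proof -
    have "expectation ?X = expectation (real_cond_exp M (F m) q) - expectation (real_cond_exp M (F (m-1)) q)"
      unfolding Xdef using Sm.real_cond_exp_int(1)[OF iq] Sm1.real_cond_exp_int(1)[OF iq] by simp
    also have "\<dots> = 0" using Sm.real_cond_exp_int(2)[OF iq] Sm1.real_cond_exp_int(2)[OF iq] by simp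
    finally show ?thesis .
  qed
  have nestAE: "AE \<eta> in M. real_cond_exp M (F (m-1)) ?A \<eta> = ?B \<eta>"
    by (rule Sm1.real_cond_exp_nested_subalg[OF subm nest iZ])
  have L2a: "(\<integral>x. (Z x - ?A x)\<^sup>2 \<partial>M) = (\<integral>x. (Z x)\<^sup>2 \<partial>M) - (\<integral>x. (?A x)\<^sup>2 \<partial>M)"
    and Ab: "AE x in M. \<bar>?A x\<bar> \<le> 1"
    by (rule cond_L2[OF PM subm Zm, where c=1], (auto simp: Zb1))+
  have Am[measurable]: "?A \<in> borel_measurable M" by simp
  have L2b: "(\<integral>x. (?A x - real_cond_exp M (F (m-1)) ?A x)\<^sup>2 \<partial>M) = (\<integral>x. (?A x)\<^sup>2 \<partial>M) - (\<integral>x. (real_cond_exp M (F (m-1)) ?A x)\<^sup>2 \<partial>M)"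
    by (rule cond_L2(1)[OF PM subm1 Am Ab])
  have "prob_space.variance M ?X = (\<integral>x. (?X x)\<^sup>2 \<partial>M)" using EX by simp
  also have "\<dots> = (\<integral>x. (?A x - real_cond_exp M (F (m-1)) ?A x)\<^sup>2 \<partial>M)"
  proof (rule integral_cong_AE)
    show "(\<lambda>x. (?X x)\<^sup>2) \<in> borel_measurable M" unfolding qmM by measurable
    show "(\<lambda>x. (?A x - real_cond_exp M (F (m-1)) ?A x)\<^sup>2) \<in> borel_measurable M" by measurable
    show "AE x in M. (?X x)\<^sup>2 = (?A x - real_cond_exp M (F (m-1)) ?A x)\<^sup>2"
      using AEX nestAE by eventually_elim simp
  qed
  also have "\<dots> \<le> (\<integral>x. (?A x)\<^sup>2 \<partial>M)" unfolding L2b by simp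
  also have "\<dots> \<le> (\<integral>x. (Z x)\<^sup>2 \<partial>M)"
  proof -
    have "0 \<le> (\<integral>x. (Z x - ?A x)\<^sup>2 \<partial>M)" by (rule Bochner_Integration.integral_nonneg) simp
    then show ?thesis using L2a by linarith
  qed
  also have "\<dots> \<le> (\<integral>x. (I x)\<^sup>2 \<partial>M)"
  proof (rule integral_mono)
    have sq: "(Z x)\<^sup>2 \<le> 1" for x
      using power_le_one[OF abs_ge_zero Zb1[of x], of 2] by simp
    show "integrable M (\<lambda>x. (Z x)\<^sup>2)"
      by (intro integrable_const_bound[where B=1] AE_I2) (auto simp: sq)
    show "integrable M (\<lambda>x. (I x)\<^sup>2)"
      using Ib by (intro integrable_const_bound[where B=1] AE_I2) (auto simp: power_le_one)
    show "(Z x)\<^sup>2 \<le> (I x)\<^sup>2" for x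
      using Zb[of x] by (metis abs_ge_zero power2_abs power_mono)
  qed
  finally show ?thesis unfolding M_def I_def .
qed


end
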